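(* The VC-density of the edge relation on the class $\mathcal J$ of all Johnson graphs is $2$.
   Context: For $m\ge k$ and a set $X$ with $|X|=m$, the Johnson graph $J(m,k)$ has as vertices the $k$-element subsets of $X$, two vertices adjacent iff their intersection has size $k-1$; $\mathcal J=\{J(m,k)\mid k,m\in\mathbb N, k\le m\}$. For a graph $G$, the edge relation set system is $(V(G),\mathcal S_G)$ with $\mathcal S_G=\{N(v)\mid v\in V(G)\}$ ($N(v)$ the set of neighbours of $v$). Its shatter function is $\pi_G(n)=\max\{|\{S\cap A\mid S\in\mathcal S_G\}| : A\subseteq V(G), |A|=n\}$. For a class $\mathcal C$ of graphs, $\pi_{\mathcal C}(n)=\max\{\pi_G(n)\mid G\in\mathcal C\}$, the VC-dimension of the edge relation on $\mathcal C$ is the supremum over $G\in\mathcal C$ of the largest size of a set $A$ with $\{A\cap S\mid S\in\mathcal S_G\}=\mathcal P(A)$, and the VC-density of the edge relation on $\mathcal C$ is $\inf\{r\in\mathbb R^+ : \pi_{\mathcal C}(n)\in\mathcal O(n^r)\}$ if that VC-dimension is finite, and $\infty$ otherwise. *)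

theory Defs
  imports Complex_Main "HOL-Library.Landau_Symbols" "HOL-Library.Extended_Real"
begin

type_synonym 'a graph = "'a set \<times> ('a \<Rightarrow> 'a \<Rightarrow> bool)"

definition verts :: "'a graph \<Rightarrow> 'a set" where
  "verts G = fst G"

definition adj :: "'a graph \<Rightarrow> 'a \<Rightarrow> 'a \<Rightarrow> bool" where
  "adj G = snd G"

definition nbhd :: "'a graph \<Rightarrow> 'a \<Rightarrow> 'a set" where
  "nbhd G v = {u \<in> verts G. adj G v u}"

definition edge_sets :: "'a graph \<Rightarrow> 'a set set" where
  "edge_sets G = nbhd G ` verts G"

definition traces :: "'a graph \<Rightarrow> 'a set \<Rightarrow> 'a set set" where
  "traces G A = (\<lambda>S. S \<inter> A) ` edge_sets G"

text \<open>Shatter function pi_G(n) (maximum over n-element subsets A of V(G);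
  0 if there is no such subset).\<close>
definition shatter_fn :: "'a graph \<Rightarrow> nat \<Rightarrow> nat" where
  "shatter_fn G n = Sup {card (traces G A) | A. A \<subseteq> verts G \<and> finite A \<and> card A = n}"

definition class_shatter_fn :: "'a graph set \<Rightarrow> nat \<Rightarrow> nat" where
  "class_shatter_fn C n = Sup (( \<lambda>G. shatter_fn G n) ` C)"

definition shattered :: "'a graph \<Rightarrow> 'a set \<Rightarrow> bool" where
  "shattered G A \<longleftrightarrow> traces G A = Pow A"

definition vc_dim_finite :: "'a graph set \<Rightarrow> bool" where
  "vc_dim_finite C \<longleftrightarrow> (\<exists>d::nat. \<forall>G\<in>C. \<forall>A. A \<subseteq> verts G \<and> shattered G A \<longrightarrow> finite A \<and> card A \<le> d)"

definition vc_density :: "'a graph set \<Rightarrow> ereal" where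
  "vc_density C = (if vc_dim_finite C
     then ereal (Inf {r::real. r > 0 \<and> (\<lambda>n. real (class_shatter_fn C n)) \<in> O(\<lambda>n. real n powr r)})
     else \<infinity>)"

text \<open>Johnson graph J(m,k) on the ground set X = {0..<m}.
  Adjacency: |A \<inter> B| = k - 1 (written as |A \<inter> B| + 1 = k to avoid truncated subtraction).\<close>
definition johnson_graph :: "nat \<Rightarrow> nat \<Rightarrow> nat set graph" where
  "johnson_graph m k = ({A. A \<subseteq> {0..<m} \<and> card A = k}, \<lambda>A B. card (A \<inter> B) + 1 = k)"

definition johnson_class :: "nat set graph set" where
  "johnson_class = {johnson_graph m k | m k. k \<le> m}"

end

theory Submission
  imports Defs
begin

definition tr :: "nat \<Rightarrow> nat set set \<Rightarrow> nat set \<Rightarrow> nat set set" where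
  "tr k A v = {B\<in>A. card (v \<inter> B) + 1 = k}"

lemma L1:
  assumes "finite Y" "card Y = k" "card (Y \<inter> X) + 1 = k" "c \<in> Y" "c \<notin> X"
  shows "Y - {c} \<subseteq> X"
proof -
  have s: "Y \<inter> X \<subseteq> Y - {c}" using assms by auto
  have "card (Y - {c}) = card (Y \<inter> X)" using assms by (simp add: card_Diff_singleton)
  hence "Y \<inter> X = Y - {c}" using s assms(1) by (intro card_subset_eq) auto
  thus ?thesis by auto
qed

lemma eqcard:
  assumes "finite X" "finite Y" "card X = k" "card Y = k" "X \<noteq> Y"
  shows "card (X \<inter> Y) < k"
proof (rule ccontr)
  assume "\<not> card (X \<inter> Y) < k"
  hence c: "card (X \<inter> Y) = k" using card_mono[OF assms(1), of "X \<inter> Y"] assms by auto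
  have "X \<inter> Y = X" using c assms by (intro card_subset_eq) auto
  moreover have "X \<inter> Y = Y" using c assms by (intro card_subset_eq) auto
  ultimately show False using assms by auto
qed

lemma int_lower:
  assumes "finite v" "card v = k" "card (v \<inter> B) + 1 = k" "card (v \<inter> B') + 1 = k" "finite B"
  shows "k \<le> card (B \<inter> B') + 2"
proof -
  have "card (v \<inter> B) + card (v \<inter> B') = card ((v \<inter> B) \<union> (v \<inter> B')) + card ((v \<inter> B) \<inter> (v \<inter> B'))"
    using assms by (intro card_Un_Int) auto
  moreover have "card ((v \<inter> B) \<union> (v \<inter> B')) \<le> k" using assms by (metis card_mono Int_Un_distrib Int_lower1)
  moreover have "card ((v \<inter> B) \<inter> (v \<inter> B')) \<le> card (B \<inter> B')" using assms by (intro card_mono) auto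
  ultimately show ?thesis using assms by linarith
qed

definition codes :: "nat \<Rightarrow> nat set set \<Rightarrow> nat set set set" where
  "codes k A = insert {} ((\<lambda>B. {B}) ` A
    \<union> (\<lambda>(p,a,b). tr k A ((fst p \<inter> snd p) \<union> {a,b})) `
        (SIGMA p:{p\<in>A\<times>A. card (fst p \<inter> snd p) + 2 = k}. (fst p - snd p) \<times> (snd p - fst p))
    \<union> (\<lambda>(B,B'). {X\<in>A. B \<inter> B' \<subseteq> X}) ` (A\<times>A)
    \<union> (\<lambda>(B,B'). {X\<in>A. B \<inter> B' \<subseteq> X} - {B'}) ` (A\<times>A)
    \<union> (\<lambda>(B,B'). {X\<in>A. X \<subseteq> B \<union> B'}) ` (A\<times>A)
    \<union> (\<lambda>(B,B'). {X\<in>A. X \<subseteq> B \<union> B'} - {B'}) ` (A\<times>A))"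

lemma caseA:
  assumes "finite v" "card v = k" "finite B" "card B = k" "finite B'" "card B' = k"
    "card (v \<inter> B) + 1 = k" "card (v \<inter> B') + 1 = k" "card (B \<inter> B') + 2 = k"
  shows "\<exists>a b. a \<in> B - B' \<and> b \<in> B' - B \<and> v = (B \<inter> B') \<union> {a,b}"
proof -
  let ?I = "B \<inter> B'"
  have e0: "card (v \<inter> B) + card (v \<inter> B') = card ((v \<inter> B) \<union> (v \<inter> B')) + card ((v \<inter> B) \<inter> (v \<inter> B'))"
    using assms by (intro card_Un_Int) auto
  have "(v \<inter> B) \<inter> (v \<inter> B') = v \<inter> ?I" by auto
  hence "card (v \<inter> B) + card (v \<inter> B') = card ((v \<inter> B) \<union> (v \<inter> B')) + card (v \<inter> ?I)" using e0 by simp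
  moreover have "card ((v \<inter> B) \<union> (v \<inter> B')) \<le> k" using assms by (metis card_mono Int_Un_distrib Int_lower1)
  moreover have e: "(v \<inter> B) \<inter> (v \<inter> B') = v \<inter> ?I" by auto
  moreover have "card (v \<inter> ?I) \<le> card ?I" using assms by (intro card_mono) auto
  ultimately have "card (v \<inter> ?I) = card ?I" using assms by linarith
  hence "v \<inter> ?I = ?I" using assms by (intro card_subset_eq) auto
  hence Iv: "?I \<subseteq> v" by auto
  have "card ((v \<inter> B) - ?I) = card (v \<inter> B) - card ?I"
    using Iv assms by (intro card_Diff_subset) auto
  hence "card ((v \<inter> B) - ?I) = 1" using assms by simp
  then obtain a where a: "(v \<inter> B) - ?I = {a}" by (auto simp: card_Suc_eq)
  have "card ((v \<inter> B') - ?I) = card (v \<inter> B') - card ?I"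
    using Iv assms by (intro card_Diff_subset) auto
  hence "card ((v \<inter> B') - ?I) = 1" using assms by simp
  then obtain b where b: "(v \<inter> B') - ?I = {b}" by (auto simp: card_Suc_eq)
  have aB: "a \<in> B - B'" "a \<in> v" using a by auto
  have bB: "b \<in> B' - B" "b \<in> v" using b by auto
  have sub: "?I \<union> {a,b} \<subseteq> v" using Iv aB bB by auto
  have "card (?I \<union> {a,b}) = card ?I + 2" using aB bB assms by (auto simp add: card_insert_if)
  hence "card (?I \<union> {a,b}) = card v" using assms by simp
  hence "?I \<union> {a,b} = v" using sub assms by (intro card_subset_eq) auto
  thus ?thesis using aB bB by blast
qed

lemma codes_I1: "B \<in> A \<Longrightarrow> {B} \<in> codes k A"
  unfolding codes_def by (intro insertI2 UnI1 imageI)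

lemma codes_I2: assumes "B \<in> A" "B' \<in> A" "card (B \<inter> B') + 2 = k" "a \<in> B - B'" "b \<in> B' - B"
  shows "tr k A ((B \<inter> B') \<union> {a,b}) \<in> codes k A"
proof -
  have "((B,B'),a,b) \<in> (SIGMA p:{p\<in>A\<times>A. card (fst p \<inter> snd p) + 2 = k}. (fst p - snd p) \<times> (snd p - fst p))"
    using assms by simp
  then show ?thesis unfolding codes_def
    by (intro insertI2 UnI1 UnI2 rev_image_eqI[of "((B,B'),a,b)"]) auto
qed

lemma codes_I3: "B \<in> A \<Longrightarrow> B' \<in> A \<Longrightarrow> {X\<in>A. B \<inter> B' \<subseteq> X} \<in> codes k A"
  unfolding codes_def
  apply (rule insertI2, rule UnI1, rule UnI1, rule UnI1, rule UnI2)
  by (rule rev_image_eqI[of "(B,B')"]) auto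

lemma codes_I4: "B \<in> A \<Longrightarrow> B' \<in> A \<Longrightarrow> {X\<in>A. B \<inter> B' \<subseteq> X} - {B'} \<in> codes k A"
  unfolding codes_def
  apply (rule insertI2, rule UnI1, rule UnI1, rule UnI2)
  by (rule rev_image_eqI[of "(B,B')"]) auto

lemma codes_I5: "B \<in> A \<Longrightarrow> B' \<in> A \<Longrightarrow> {X\<in>A. X \<subseteq> B \<union> B'} \<in> codes k A"
  unfolding codes_def
  apply (rule insertI2, rule UnI1, rule UnI2)
  by (rule rev_image_eqI[of "(B,B')"]) auto

lemma codes_I6: "B \<in> A \<Longrightarrow> B' \<in> A \<Longrightarrow> {X\<in>A. X \<subseteq> B \<union> B'} - {B'} \<in> codes k A"
  unfolding codes_def
  apply (rule insertI2, rule UnI2)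
  by (rule rev_image_eqI[of "(B,B')"]) auto

lemma tr_in_codes:
  assumes A: "\<And>B. B \<in> A \<Longrightarrow> finite B \<and> card B = k" and v: "finite v" "card v = k"
  shows "tr k A v \<in> codes k A"
proof -
  let ?T = "tr k A v"
  have Tm: "\<And>B. B \<in> ?T \<longleftrightarrow> B \<in> A \<and> card (v \<inter> B) + 1 = k" by (simp add: tr_def)
  have vT: "v \<notin> ?T" using Tm v by auto
  consider "?T = {}" | B where "?T = {B}" | B1 B2 where "B1 \<in> ?T" "B2 \<in> ?T" "B1 \<noteq> B2"
    by blast
  then show ?thesis
  proof cases
    case 1 then show ?thesis by (simp add: codes_def)
  next
    case (2 B) then have "B \<in> A" using Tm by auto
    with 2 show ?thesis using codes_I1 by simp
  next
    case (3 B1 B2)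
    show ?thesis
    proof (cases "\<exists>B B'. B \<in> ?T \<and> B' \<in> ?T \<and> card (B \<inter> B') + 2 = k")
      case True
      then obtain B B' where BB: "B \<in> ?T" "B' \<in> ?T" "card (B \<inter> B') + 2 = k" by blast
      then obtain a b where ab: "a \<in> B - B'" "b \<in> B' - B" "v = (B \<inter> B') \<union> {a,b}"
        using caseA[of v k B B'] Tm A v by blast
      have "tr k A ((B \<inter> B') \<union> {a,b}) \<in> codes k A" using BB ab Tm by (intro codes_I2) auto
      thus ?thesis using ab by simp
    next
      case False
      have adjT: "card (X \<inter> Y) + 1 = k" if "X \<in> ?T" "Y \<in> ?T" "X \<noteq> Y" for X Y
      proof -
        have "k \<le> card (X \<inter> Y) + 2" using int_lower[of v k X Y] that Tm A v by blast
        moreover have "card (X \<inter> Y) < k" using eqcard[of X Y k] that Tm A by blast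
        moreover have "card (X \<inter> Y) + 2 \<noteq> k" using False that by blast
        ultimately show ?thesis by linarith
      qed
      have B1A: "B1 \<in> A" "finite B1" "card B1 = k" and B2A: "B2 \<in> A" "finite B2" "card B2 = k"
        using 3 Tm A by auto
      define C where "C = B1 \<inter> B2"
      define D where "D = B1 \<union> B2"
      have cC: "card C + 1 = k" using adjT 3 C_def by blast
      have "card B1 + card B2 = card D + card C" unfolding C_def D_def using B1A B2A by (intro card_Un_Int) auto
      hence cD: "card D = k + 1" using cC B1A B2A by linarith
      have fD: "finite D" using B1A B2A D_def by auto
      have v1: "card (v \<inter> B1) + 1 = k" and v2: "card (v \<inter> B2) + 1 = k" using 3 Tm by auto
      show ?thesis
      proof (cases "C \<subseteq> v")
        case True
        have Teq: "?T = {X\<in>A. C \<subseteq> X} - {v}"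
        proof
          show "?T \<subseteq> {X\<in>A. C \<subseteq> X} - {v}"
          proof
            fix X assume X: "X \<in> ?T"
            have "C \<subseteq> X"
            proof (cases "X = B1 \<or> X = B2")
              case True thus ?thesis using C_def by auto
            next
              case False
              show ?thesis
              proof (rule ccontr)
                assume "\<not> C \<subseteq> X"
                then obtain c where c: "c \<in> C" "c \<notin> X" by auto
                have XA: "finite X" "card X = k" using X Tm A by auto
                have a1: "B1 - {c} \<subseteq> X"
                  using L1[of B1 k X c] adjT[of B1 X] X 3 False B1A c C_def by (auto simp: Int_commute)
                have a2: "B2 - {c} \<subseteq> X"
                  using L1[of B2 k X c] adjT[of B2 X] X 3 False B2A c C_def by (auto simp: Int_commute)
                have a3: "v - {c} \<subseteq> X"
                  using L1[of v k X c] X Tm v c True by auto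
                have "D - {c} \<subseteq> X" using a1 a2 D_def by auto
                moreover have "card (D - {c}) = k" using cD c C_def D_def fD by (auto simp: card_Diff_singleton)
                ultimately have "D - {c} = X" using XA by (intro card_subset_eq) auto
                hence "v \<subseteq> D" using a3 c C_def D_def by auto
                have e1: "v \<inter> B1 = C"
                proof -
                  have "C \<subseteq> v \<inter> B1" using True C_def by auto
                  moreover have "card C = card (v \<inter> B1)" using cC v1 by simp
                  ultimately show ?thesis using v by (intro card_subset_eq[symmetric]) auto
                qed
                have e2: "v \<inter> B2 = C"
                proof -
                  have "C \<subseteq> v \<inter> B2" using True C_def by auto
                  moreover have "card C = card (v \<inter> B2)" using cC v2 by simp
                  ultimately show ?thesis using v by (intro card_subset_eq[symmetric]) auto
                qed
                have "v = (v \<inter> B1) \<union> (v \<inter> B2)" using \<open>v \<subseteq> D\<close> D_def by auto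
                hence "v = C" using e1 e2 by simp
                thus False using cC v by simp
              qed
            qed
            thus "X \<in> {X\<in>A. C \<subseteq> X} - {v}" using X vT Tm by auto
          qed
        next
          show "{X\<in>A. C \<subseteq> X} - {v} \<subseteq> ?T"
          proof
            fix X assume X: "X \<in> {X\<in>A. C \<subseteq> X} - {v}"
            have XA: "finite X" "card X = k" "X \<in> A" "X \<noteq> v" "C \<subseteq> X" using X A by auto
            have "card (v \<inter> X) < k" using eqcard[of v X k] XA v by auto
            moreover have "card C \<le> card (v \<inter> X)" using XA True v by (intro card_mono) auto
            ultimately show "X \<in> ?T" using cC Tm XA by auto
          qed
        qed
        show ?thesis
        proof (cases "v \<in> A")
          case True
          have "C \<subseteq> B1 \<inter> v" using \<open>C \<subseteq> v\<close> C_def by auto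
          moreover have "card C = card (B1 \<inter> v)" using cC v1 by (simp add: Int_commute)
          ultimately have "C = B1 \<inter> v" using B1A by (intro card_subset_eq) auto
          thus ?thesis using Teq codes_I4[of B1 A v k] True B1A by simp
        next
          case False
          hence "?T = {X\<in>A. B1 \<inter> B2 \<subseteq> X}" using Teq C_def by auto
          thus ?thesis using codes_I3[of B1 A B2 k] B1A B2A by simp
        qed
      next
        case False
        then obtain c where c: "c \<in> C" "c \<notin> v" by auto
        have "B1 - {c} \<subseteq> v" using L1[of B1 k v c] v1 B1A c C_def by (auto simp: Int_commute)
        moreover have "B2 - {c} \<subseteq> v" using L1[of B2 k v c] v2 B2A c C_def by (auto simp: Int_commute)
        ultimately have "D - {c} \<subseteq> v" using D_def by auto
        moreover have "card (D - {c}) = k" using cD c C_def D_def fD by (auto simp: card_Diff_singleton)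
        ultimately have vD: "D - {c} = v" using v by (intro card_subset_eq) auto
        have Teq: "?T = {X\<in>A. X \<subseteq> D} - {v}"
        proof
          show "?T \<subseteq> {X\<in>A. X \<subseteq> D} - {v}"
          proof
            fix X assume X: "X \<in> ?T"
            have XA: "finite X" "card X = k" using X Tm A by auto
            have "X \<subseteq> D"
            proof (cases "X = B1 \<or> X = B2")
              case True thus ?thesis using D_def by auto
            next
              case False
              show ?thesis
              proof (rule ccontr)
                assume "\<not> X \<subseteq> D"
                then obtain z where z: "z \<in> X" "z \<notin> D" by auto
                have a1: "X - {z} \<subseteq> B1"
                  using L1[of X k B1 z] adjT[of X B1] X 3 False XA z D_def by auto
                have a2: "X - {z} \<subseteq> B2"
                  using L1[of X k B2 z] adjT[of X B2] X 3 False XA z D_def by auto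
                have a3: "X - {z} \<subseteq> v"
                  using L1[of X k v z] X Tm XA z vD by (auto simp: Int_commute)
                have "X - {z} \<subseteq> C - {c}" using a1 a2 a3 c C_def by auto
                moreover have "finite (C - {c})" using C_def B1A by auto
                ultimately have "card (X - {z}) \<le> card (C - {c})" by (intro card_mono)
                moreover have "card (X - {z}) + 1 = k" using XA z card_gt_0_iff[of X] by (auto simp add: card_Diff_singleton)
                moreover have "card (C - {c}) + 2 = k" using cC c C_def B1A card_gt_0_iff[of C] by (auto simp add: card_Diff_singleton)
                ultimately show False by linarith
              qed
            qed
            thus "X \<in> {X\<in>A. X \<subseteq> D} - {v}" using X vT Tm by auto
          qed
        next
          show "{X\<in>A. X \<subseteq> D} - {v} \<subseteq> ?T"
          proof
            fix X assume X: "X \<in> {X\<in>A. X \<subseteq> D} - {v}"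
            have XA: "finite X" "card X = k" "X \<in> A" "X \<noteq> v" "X \<subseteq> D" using X A by auto
            have "card (v \<inter> X) < k" using eqcard[of v X k] XA v by auto
            moreover have "card v + card X = card (v \<union> X) + card (v \<inter> X)"
              using XA v by (intro card_Un_Int) auto
            moreover have "card (v \<union> X) \<le> card D" using XA vD fD by (intro card_mono) auto
            ultimately show "X \<in> ?T" using cD Tm XA v by auto
          qed
        qed
        show ?thesis
        proof (cases "v \<in> A")
          case True
          have "B1 \<union> v \<subseteq> D" using vD D_def by auto
          moreover have "card B1 + card v = card (B1 \<union> v) + card (B1 \<inter> v)"
            using B1A v by (intro card_Un_Int) auto
          moreover have "card (B1 \<inter> v) + 1 = k" using v1 by (simp add: Int_commute)
          ultimately have "D = B1 \<union> v" using B1A v cD fD by (intro card_subset_eq[symmetric]) auto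
          thus ?thesis using Teq codes_I6[of B1 A v k] True B1A by simp
        next
          case False
          hence "?T = {X\<in>A. X \<subseteq> B1 \<union> B2}" using Teq D_def by auto
          thus ?thesis using codes_I5[of B1 A B2 k] B1A B2A by simp
        qed
      qed
    qed
  qed
qed

lemma card_codes:
  assumes fA: "finite A" and A: "\<And>B. B \<in> A \<Longrightarrow> finite B \<and> card B = k"
  shows "finite (codes k A) \<and> card (codes k A) \<le> 8 * card A ^ 2 + card A + 1"
proof -
  let ?n = "card A"
  define P where "P = {p\<in>A\<times>A. card (fst p \<inter> snd p) + 2 = k}"
  define Sg where "Sg = (SIGMA p:P. (fst p - snd p) \<times> (snd p - fst p))"
  define S1 where "S1 = (\<lambda>B. {B}) ` A"
  define S2 where "S2 = (\<lambda>(p,a,b). tr k A ((fst p \<inter> snd p) \<union> {a,b})) ` Sg"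
  define S3 where "S3 = (\<lambda>(B,B'). {X\<in>A. B \<inter> B' \<subseteq> X}) ` (A\<times>A)"
  define S4 where "S4 = (\<lambda>(B,B'). {X\<in>A. B \<inter> B' \<subseteq> X} - {B'}) ` (A\<times>A)"
  define S5 where "S5 = (\<lambda>(B,B'). {X\<in>A. X \<subseteq> B \<union> B'}) ` (A\<times>A)"
  define S6 where "S6 = (\<lambda>(B,B'). {X\<in>A. X \<subseteq> B \<union> B'} - {B'}) ` (A\<times>A)"
  have ceq: "codes k A = insert {} (S1 \<union> S2 \<union> S3 \<union> S4 \<union> S5 \<union> S6)"
    unfolding codes_def S1_def S2_def S3_def S4_def S5_def S6_def Sg_def P_def by simp
  have fP: "finite P" using fA unfolding P_def by auto
  have c4: "card ((fst p - snd p) \<times> (snd p - fst p)) = 4" if "p \<in> P" for p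
  proof -
    obtain B B' where p: "p = (B,B')" by (cases p)
    have B: "B \<in> A" "B' \<in> A" "card (B \<inter> B') + 2 = k" using that p P_def by auto
    have "card (B - B') = card B - card (B \<inter> B')" using A[of B] B by (simp add: card_Diff_subset_Int)
    hence 1: "card (B - B') = 2" using A[of B] B by simp
    have "card (B' - B) = card B' - card (B' \<inter> B)" using A[of B'] B by (simp add: card_Diff_subset_Int)
    hence 2: "card (B' - B) = 2" using A[of B'] B by (simp add: Int_commute)
    show ?thesis using 1 2 p by (simp add: card_cartesian_product)
  qed
  have fSg: "finite Sg" unfolding Sg_def using fP A by (intro finite_SigmaI) (auto simp: P_def)
  have "card Sg = (\<Sum>p\<in>P. card ((fst p - snd p) \<times> (snd p - fst p)))"
    unfolding Sg_def using fP A by (intro card_SigmaI) (auto simp: P_def)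
  also have "\<dots> = (\<Sum>p\<in>P. 4)" using c4 by (intro sum.cong) auto
  also have "\<dots> = 4 * card P" by simp
  also have "card P \<le> card (A \<times> A)" unfolding P_def using fA by (intro card_mono) auto
  hence "4 * card P \<le> 4 * ?n ^ 2" by (simp add: card_cartesian_product power2_eq_square)
  finally have cSg: "card Sg \<le> 4 * ?n ^ 2" .
  have fAA: "finite (A \<times> A)" "card (A \<times> A) = ?n ^ 2" using fA by (auto simp: card_cartesian_product power2_eq_square)
  have f: "finite S1" "finite S2" "finite S3" "finite S4" "finite S5" "finite S6"
    unfolding S1_def S2_def S3_def S4_def S5_def S6_def using fA fSg fAA by auto
  have c1: "card S1 \<le> ?n" unfolding S1_def by (rule card_image_le[OF fA])
  have c2: "card S2 \<le> 4 * ?n ^ 2" unfolding S2_def using card_image_le[OF fSg] cSg by (meson le_trans)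
  have c3: "card S3 \<le> ?n ^ 2" "card S4 \<le> ?n ^ 2" "card S5 \<le> ?n ^ 2" "card S6 \<le> ?n ^ 2"
    unfolding S3_def S4_def S5_def S6_def using card_image_le[OF fAA(1)] fAA(2) by metis+
  have "card (S1 \<union> S2 \<union> S3 \<union> S4 \<union> S5 \<union> S6) \<le> card S1 + card S2 + card S3 + card S4 + card S5 + card S6"
    by (meson card_Un_le le_trans add_le_mono order_refl)
  hence "card (S1 \<union> S2 \<union> S3 \<union> S4 \<union> S5 \<union> S6) \<le> 8 * ?n ^ 2 + ?n" using c1 c2 c3 by linarith
  moreover have "card (codes k A) \<le> card (S1 \<union> S2 \<union> S3 \<union> S4 \<union> S5 \<union> S6) + 1"
    unfolding ceq using f by (simp add: card_insert_if)
  moreover have "finite (codes k A)" unfolding ceq using f by simp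
  ultimately show ?thesis by linarith
qed

lemma verts_J: "verts (johnson_graph m k) = {X. X \<subseteq> {0..<m} \<and> card X = k}"
  by (simp add: verts_def johnson_graph_def)

lemma traces_J:
  assumes "A \<subseteq> verts (johnson_graph m k)"
  shows "traces (johnson_graph m k) A = tr k A ` verts (johnson_graph m k)"
  unfolding traces_def edge_sets_def image_image
proof (rule image_cong[OF refl])
  fix v assume "v \<in> verts (johnson_graph m k)"
  show "nbhd (johnson_graph m k) v \<inter> A = tr k A v"
    using assms unfolding nbhd_def tr_def adj_def by (auto simp: johnson_graph_def verts_J)
qed

lemma card_traces_J:
  assumes "A \<subseteq> verts (johnson_graph m k)" "finite A"
  shows "card (traces (johnson_graph m k) A) \<le> 8 * card A ^ 2 + card A + 1"
proof -
  have Ak: "\<And>B. B \<in> A \<Longrightarrow> finite B \<and> card B = k"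
    using assms by (auto simp: verts_J intro: finite_subset)
  have "traces (johnson_graph m k) A \<subseteq> codes k A"
    unfolding traces_J[OF assms(1)]
  proof
    fix T assume "T \<in> tr k A ` verts (johnson_graph m k)"
    then obtain v where "v \<in> verts (johnson_graph m k)" "T = tr k A v" by auto
    then show "T \<in> codes k A" using tr_in_codes[OF Ak] by (auto simp: verts_J intro: finite_subset)
  qed
  thus ?thesis using card_codes[OF assms(2) Ak] by (meson card_mono le_trans)
qed

lemma nat_Sup_le: "(\<And>x. x \<in> X \<Longrightarrow> x \<le> (b::nat)) \<Longrightarrow> Sup X \<le> b"
  by (cases "X = {}") (auto intro: cSup_least)

lemma J_cases: "G \<in> johnson_class \<Longrightarrow> \<exists>m k. G = johnson_graph m k"
  by (auto simp: johnson_class_def)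

lemma shatter_le:
  assumes "G \<in> johnson_class"
  shows "shatter_fn G n \<le> 8 * n ^ 2 + n + 1"
proof -
  obtain m k where G: "G = johnson_graph m k" using J_cases[OF assms] by blast
  let ?S = "{card (traces G A) | A. A \<subseteq> verts G \<and> finite A \<and> card A = n}"
  have "\<forall>x\<in>?S. x \<le> 8 * n ^ 2 + n + 1" using card_traces_J G by auto
  thus ?thesis unfolding shatter_fn_def by (intro nat_Sup_le) blast
qed

lemma class_le: "class_shatter_fn johnson_class n \<le> 8 * n ^ 2 + n + 1"
proof -
  have "\<forall>x\<in>(\<lambda>G. shatter_fn G n) ` johnson_class. x \<le> 8 * n ^ 2 + n + 1" using shatter_le by auto
  thus ?thesis unfolding class_shatter_fn_def by (intro nat_Sup_le) blast
qed

lemma choose2_bound: "n \<ge> 2 \<Longrightarrow> n * n \<le> 4 * (n choose 2)"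
proof (induction n rule: nat_induct_at_least)
  case base then show ?case by (simp add: numeral_2_eq_2)
next
  case (Suc n)
  have "Suc n choose 2 = (n choose 1) + (n choose 2)" by (simp add: numeral_2_eq_2)
  then show ?case using Suc by simp
qed

lemma class_ge: "n choose 2 \<le> class_shatter_fn johnson_class n"
proof (cases "n = 0")
  case True then show ?thesis by (simp add: numeral_2_eq_2)
next
  case False
  define G where "G = johnson_graph (n+1) 2"
  have GJ: "G \<in> johnson_class" unfolding johnson_class_def G_def using False
    by (intro CollectI exI[of _ "n+1"] exI[of _ 2]) auto
  define f where "f = (\<lambda>i::nat. {0::nat, i})"
  define A0 where "A0 = f ` {1..n}"
  have injf: "inj_on f {1..n}" unfolding inj_on_def f_def by (auto simp: doubleton_eq_iff)
  have cA0: "card A0 = n" unfolding A0_def using card_image[OF injf] by simp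
  have A0v: "A0 \<subseteq> verts G" unfolding A0_def G_def verts_J f_def by auto
  have fA0: "finite A0" unfolding A0_def by simp
  let ?P = "{S. S \<subseteq> {1..n} \<and> card S = 2}"
  have sub: "(\<lambda>S. f ` S) ` ?P \<subseteq> traces G A0"
  proof
    fix T assume "T \<in> (\<lambda>S. f ` S) ` ?P"
    then obtain S where S: "S \<subseteq> {1..n}" "card S = 2" "T = f ` S" by auto
    have Sv: "S \<in> verts G" using S unfolding G_def verts_J by auto
    have "tr 2 A0 S = f ` S"
    proof
      show "tr 2 A0 S \<subseteq> f ` S"
      proof
        fix B assume "B \<in> tr 2 A0 S"
        then obtain i where i: "i \<in> {1..n}" "B = f i" "card (S \<inter> {0, i}) = 1"
          unfolding tr_def A0_def f_def by auto
        have "i \<notin> S \<Longrightarrow> S \<inter> {0, i} = {}" using S by auto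
        hence "i \<in> S" using i by fastforce
        thus "B \<in> f ` S" using i by auto
      qed
    next
      show "f ` S \<subseteq> tr 2 A0 S"
      proof
        fix B assume "B \<in> f ` S"
        then obtain i where i: "i \<in> S" "B = f i" by auto
        have "S \<inter> {0, i} = {i}" using i S by auto
        thus "B \<in> tr 2 A0 S" unfolding tr_def A0_def using i S by (auto simp: f_def)
      qed
    qed
    thus "T \<in> traces G A0" using traces_J[of A0 "n+1" 2] A0v Sv S unfolding G_def by auto
  qed
  have "card ((\<lambda>S. f ` S) ` ?P) = card ?P"
  proof (intro card_image inj_onI)
    fix X Y assume "X \<in> ?P" "Y \<in> ?P" "f ` X = f ` Y"
    thus "X = Y" using inj_on_image_eq_iff[OF injf, of X Y] by auto
  qed
  also have "card ?P = n choose 2" using n_subsets[of "{1..n}" 2] by simp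
  finally have "card ((\<lambda>S. f ` S) ` ?P) = n choose 2" .
  have "n choose 2 \<le> card (traces G A0)"
  proof -
    have "traces G A0 \<subseteq> Pow A0" unfolding traces_def by auto
    hence "finite (traces G A0)" using fA0 by (meson finite_Pow_iff finite_subset)
    thus ?thesis using card_mono[OF _ sub] \<open>card ((\<lambda>S. f ` S) ` ?P) = n choose 2\<close> by simp
  qed
  also have "card (traces G A0) \<le> shatter_fn G n"
    unfolding shatter_fn_def
  proof (rule cSup_upper)
    show "card (traces G A0) \<in> {card (traces G A) | A. A \<subseteq> verts G \<and> finite A \<and> card A = n}"
      using A0v fA0 cA0 by auto
    show "bdd_above {card (traces G A) | A. A \<subseteq> verts G \<and> finite A \<and> card A = n}"
      using card_traces_J unfolding G_def by (intro bdd_aboveI[of _ "8 * n ^ 2 + n + 1"]) auto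
  qed
  also have "shatter_fn G n \<le> class_shatter_fn johnson_class n"
    unfolding class_shatter_fn_def using GJ shatter_le
    by (intro cSup_upper) (auto intro!: bdd_aboveI[of _ "8 * n ^ 2 + n + 1"])
  finally show ?thesis .
qed

lemma exp_beats: "n \<ge> 10 \<Longrightarrow> 8 * n ^ 2 + n + 1 < (2::nat) ^ n"
proof (induction n rule: nat_induct_at_least)
  case base then show ?case by simp
next
  case (Suc n)
  have "8 * Suc n ^ 2 + Suc n + 1 \<le> 2 * (8 * n ^ 2 + n + 1)"
  proof -
    have h: "10 * n \<le> n * n" using Suc.hyps by (intro mult_le_mono1)
    have e1: "8 * Suc n ^ 2 + Suc n + 1 = 8*(n*n) + 17*n + 10" by (simp add: power2_eq_square algebra_simps)
    have e2: "2 * (8 * n ^ 2 + n + 1) = 16*(n*n) + 2*n + 2" by (simp add: power2_eq_square algebra_simps)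
    show ?thesis unfolding e1 e2 using h Suc.hyps by linarith
  qed
  then show ?case using Suc by simp
qed

lemma vc_fin: "vc_dim_finite johnson_class"
  unfolding vc_dim_finite_def
proof (intro exI[of _ 9] ballI allI impI)
  fix G A assume G: "G \<in> johnson_class" and A: "A \<subseteq> verts G \<and> shattered G A"
  obtain m k where Gm: "G = johnson_graph m k" using J_cases[OF G] by blast
  have "finite (verts G)" unfolding Gm verts_J
    by (rule finite_subset[of _ "Pow {0..<m}"]) auto
  hence fA: "finite A" using A finite_subset by blast
  have "card (Pow A) \<le> 8 * card A ^ 2 + card A + 1"
    using card_traces_J[of A m k] A fA Gm unfolding shattered_def by simp
  hence "2 ^ card A \<le> 8 * card A ^ 2 + card A + 1" using fA by (simp add: card_Pow)
  hence "card A \<le> 9" using exp_beats[of "card A"] by (cases "card A \<ge> 10") auto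
  thus "finite A \<and> card A \<le> 9" using fA by simp
qed

definition F :: "nat \<Rightarrow> real" where "F n = real (class_shatter_fn johnson_class n)"

lemma F_up: "F \<in> O(\<lambda>n. real n powr 2)"
proof (rule bigoI[of _ 10])
  show "\<forall>\<^sub>F n in sequentially. norm (F n) \<le> 10 * norm (real n powr 2)"
    using eventually_ge_at_top[of "1::nat"]
  proof eventually_elim
    case (elim n)
    have "class_shatter_fn johnson_class n \<le> 10 * n ^ 2"
    proof -
      have "n \<le> n * n" "1 \<le> n * n" using elim by (simp_all add: Suc_le_eq)
      thus ?thesis using class_le[of n] unfolding power2_eq_square by linarith
    qed
    hence "F n \<le> 10 * real n ^ 2" unfolding F_def by (metis of_nat_le_iff of_nat_mult of_nat_power of_nat_numeral)
    thus ?case using elim by (simp add: F_def powr_realpow)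
  qed
qed

lemma F_low: "(\<lambda>n. real n powr 2) \<in> O(F)"
proof (rule bigoI[of _ 4])
  show "\<forall>\<^sub>F n in sequentially. norm (real n powr 2) \<le> 4 * norm (F n)"
    using eventually_ge_at_top[of "2::nat"]
  proof eventually_elim
    case (elim n)
    have "n * n \<le> 4 * class_shatter_fn johnson_class n"
      using choose2_bound[OF elim] class_ge[of n] by linarith
    hence "real n * real n \<le> 4 * F n" unfolding F_def by (metis of_nat_le_iff of_nat_mult of_nat_numeral)
    thus ?case using elim by (simp add: F_def powr_realpow power2_eq_square)
  qed
qed

lemma powr_O: "(\<lambda>n::nat. real n powr p) \<in> O(\<lambda>n. real n powr q) \<longleftrightarrow> p \<le> q"
  by (rule powr_bigo_iff[OF filterlim_real_sequentially]) simp

lemma Fset: "{r::real. r > 0 \<and> (\<lambda>n. real (class_shatter_fn johnson_class n)) \<in> O(\<lambda>n. real n powr r)} = {2..}"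
proof -
  have e: "(\<lambda>n. real (class_shatter_fn johnson_class n)) = F" by (simp add: F_def fun_eq_iff)
  have "F \<in> O(\<lambda>n. real n powr r) \<longleftrightarrow> 2 \<le> r" for r
  proof
    assume "F \<in> O(\<lambda>n. real n powr r)"
    hence "(\<lambda>n. real n powr 2) \<in> O(\<lambda>n. real n powr r)" using F_low landau_o.big_trans by blast
    thus "2 \<le> r" using powr_O by blast
  next
    assume "2 \<le> r"
    hence "(\<lambda>n. real n powr 2) \<in> O(\<lambda>n. real n powr r)" using powr_O by blast
    thus "F \<in> O(\<lambda>n. real n powr r)" using F_up landau_o.big_trans by blast
  qed
  thus ?thesis unfolding e by auto
qed

theorem mainTheorem10:
  shows "vc_density johnson_class = 2"
  unfolding vc_density_def using vc_fin Fset by simp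

end
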